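(* In the setting of the context, let $k\ge1$, $a,b\ge0$ be integers with $a+b<k$. Then: (0) $\mathbf K_{k,a,b}(Z,Z')=\frac{n}{k-a-b}\big(\mathbf G_{k,a,b}(Z)-\mathbf G_{k,a,b}(Z')\big)$; (1) $\mathbf K_{k,a,b}(z',z)=-\mathbf K_{k,a,b}(z,z')$ identically; (2) $\mathbb E[\mathbf K_{k,a,b}(Z,Z')\mid Z]=\mathbf G_{k,a,b}(Z)$; (3) $(\mathbf D_1(Z)-\mathbf D_1(Z'))\mathbf K_{k,a,b}(Z,Z')=0$ and $\mathbf K_{k,a,b}(Z,Z')(\mathbf D_2(Z)-\mathbf D_2(Z'))=0$.
   Context: Let $Z=(Z_1,\dots,Z_n)$ be independent real random variables with finite moments of all orders; for $i\in[n]$, $\tilde Z_i$ is an independent copy of $Z_i$, $Z^{(i)}=(Z_1,\dots,Z_{i-1},\tilde Z_i,Z_{i+1},\dots,Z_n)$, and $Z'=Z^{(i)}$ for $i$ uniform in $[n]$ independent of everything else. Multi-index notation: for $\alpha,\beta\in\mathbb N^n$, sums and products are entrywise, $Z^\alpha=\prod_iZ_i^{\alpha_i}$, $|\alpha|_0$ is the number of nonzero entries, $|\alpha|_1=\sum_i\alpha_i$, $\alpha\le\beta$ is entrywise, $\alpha\unlhd\beta$ means $\alpha_i\in\{0,\beta_i\}$ for all $i$, and for $\gamma\in\{0,1\}^n$, $1-\gamma$ flips all bits. Polynomials are formal polynomials in $Z_1,\dots,Z_n$. $\nabla_\alpha(Z^\beta)=Z^{\beta-\alpha}$ if $\alpha\unlhd\beta$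 and $0$ otherwise (extended linearly, entrywise to matrices). For $\alpha\ne0$, $\chi_\alpha=\prod_{i:\alpha_i>0}(Z_i^{\alpha_i}-\mathbb E[Z_i^{\alpha_i}])$; every polynomial $f$ of degree $\le d_p$ is uniquely $c+\sum_{\alpha\ne0}\hat f(\alpha)\chi_\alpha$. Let $\mathcal I,\mathcal J$ be finite sets and $\mathbf F$ an $\mathcal I\times\mathcal J$ matrix with polynomial entries of total degree $\le d_p$; $\mathbf X=\mathbf F-\mathbb E\mathbf F=\sum_{\alpha\ne0}\hat{\mathbf X}(\alpha)\chi_\alpha$ and $\mathbf X_k=\sum_{|\alpha|_0=k}\hat{\mathbf X}(\alpha)\chi_\alpha$. $\mathcal K$ is the set of pairs $(\alpha,\gamma)$, $\alpha\in\mathbb N^n$, $|\alpha|_1\le d_p$, $\gamma\in\{0,1\}^n$, $\gamma\le\alpha$. $\mathbf D_1$ (resp. $\mathbf D_2$) is diagonal, indexed by $\mathcal I\times\mathcal K$ (resp. $\mathcal J\times\mathcal K$), with $(I,\alpha,\gamma)$ entry $\sqrt{\mathbb E[Z^{2\alpha\cdot(1-\gamma)}]}\,Z^{\alpha\cdot\gamma}$. $\mathbf G_{k,a,b}$ has rows $\mathcal I\times\mathcal K$, columns $\mathcal J\times\mathcal K$, and $[(I,\alpha_1,\gamma_1),(J,\alpha_2,\gamma_2)]$ entry $\nabla_{\alpha_1+\alpha_2}\mathbf X_k[I,J]$ if $|\alpha_1|_0=a,|\alpha_2|_0=b,\alpha_1\cdot\alpha_2=0$, and $0$ otherwise. For a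 mean-zero polynomial $f=\sum_{\alpha\ne0}\hat f(\alpha)\chi_\alpha$ put $\mathcal L^{-1}(f)=\sum_{\alpha\neq0}\frac{n}{|\alpha|_0}\hat f(\alpha)\chi_\alpha$ (applied entrywise), and for $a+b<k$ define the inner kernel $\mathbf K_{k,a,b}(z,z')=\mathcal L^{-1}(\mathbf G_{k,a,b})(z)-\mathcal L^{-1}(\mathbf G_{k,a,b})(z')$. *)

theory Defs
  imports "HOL-Probability.Probability" "HOL-Library.Poly_Mapping"
begin

text \<open>Multi-indices are finitely supported maps nat =>0 nat (coordinate i < n stands for Z_(i+1));
  formal polynomials are finitely supported maps from multi-indices to real coefficients.\<close>

type_synonym mindex = "nat \<Rightarrow>\<^sub>0 nat"
type_synonym mpoly = "mindex \<Rightarrow>\<^sub>0 real"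

definition mconst :: "real \<Rightarrow> mpoly" where
  "mconst c = Poly_Mapping.single 0 c"

definition mmonom :: "mindex \<Rightarrow> mpoly" where
  "mmonom \<beta> = Poly_Mapping.single \<beta> 1"

definition mdeg :: "mindex \<Rightarrow> nat" where
  "mdeg \<alpha> = (\<Sum>i\<in>Poly_Mapping.keys \<alpha>. Poly_Mapping.lookup \<alpha> i)"

definition msupp :: "mindex \<Rightarrow> nat" where
  "msupp \<alpha> = card (Poly_Mapping.keys \<alpha>)"

definition munlhd :: "mindex \<Rightarrow> mindex \<Rightarrow> bool" where
  "munlhd \<alpha> \<beta> \<longleftrightarrow> (\<forall>i. Poly_Mapping.lookup \<alpha> i = 0 \<or> Poly_Mapping.lookup \<alpha> i = Poly_Mapping.lookup \<beta> i)"

definition mpeval :: "mpoly \<Rightarrow> (nat \<Rightarrow> real) \<Rightarrow> real" where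
  "mpeval p z = (\<Sum>\<beta>\<in>Poly_Mapping.keys p. Poly_Mapping.lookup p \<beta> * (\<Prod>i\<in>Poly_Mapping.keys \<beta>. z i ^ Poly_Mapping.lookup \<beta> i))"

definition nabla :: "mindex \<Rightarrow> mpoly \<Rightarrow> mpoly" where
  "nabla \<alpha> p = (\<Sum>\<beta>\<in>Poly_Mapping.keys p. if munlhd \<alpha> \<beta> then Poly_Mapping.single (\<beta> - \<alpha>) (Poly_Mapping.lookup p \<beta>) else 0)"

definition MI :: "nat \<Rightarrow> nat \<Rightarrow> mindex set" where
  "MI n dp = {\<alpha>. \<alpha> \<noteq> 0 \<and> Poly_Mapping.keys \<alpha> \<subseteq> {..<n} \<and> mdeg \<alpha> \<le> dp}"

text \<open>mu i is the law of Z_(i+1); the joint law of Z is the product measure (independence).\<close>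
definition Zlaw :: "nat \<Rightarrow> (nat \<Rightarrow> real measure) \<Rightarrow> (nat \<Rightarrow> real) measure" where
  "Zlaw n \<mu> = PiM {..<n} \<mu>"

definition mom :: "(nat \<Rightarrow> real measure) \<Rightarrow> nat \<Rightarrow> nat \<Rightarrow> real" where
  "mom \<mu> i m = (\<integral>t. t ^ m \<partial>(\<mu> i))"

definition chi :: "(nat \<Rightarrow> real measure) \<Rightarrow> mindex \<Rightarrow> mpoly" where
  "chi \<mu> \<alpha> = (\<Prod>i\<in>Poly_Mapping.keys \<alpha>.
      mmonom (Poly_Mapping.single i (Poly_Mapping.lookup \<alpha> i)) - mconst (mom \<mu> i (Poly_Mapping.lookup \<alpha> i)))"

definition fhat :: "nat \<Rightarrow> nat \<Rightarrow> (nat \<Rightarrow> real measure) \<Rightarrow> mpoly \<Rightarrow> mindex \<Rightarrow> real" where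
  "fhat n dp \<mu> f = (THE h. (\<forall>\<alpha>. \<alpha> \<notin> MI n dp \<longrightarrow> h \<alpha> = 0) \<and>
      (\<exists>c. f = mconst c + (\<Sum>\<alpha>\<in>MI n dp. mconst (h \<alpha>) * chi \<mu> \<alpha>)))"

definition Linv :: "nat \<Rightarrow> nat \<Rightarrow> (nat \<Rightarrow> real measure) \<Rightarrow> mpoly \<Rightarrow> mpoly" where
  "Linv n dp \<mu> f = (\<Sum>\<alpha>\<in>MI n dp.
      mconst (real n / real (msupp \<alpha>) * fhat n dp \<mu> f \<alpha>) * chi \<mu> \<alpha>)"

definition Xmat :: "nat \<Rightarrow> (nat \<Rightarrow> real measure) \<Rightarrow> ('i \<Rightarrow> 'j \<Rightarrow> mpoly) \<Rightarrow> 'i \<Rightarrow> 'j \<Rightarrow> mpoly" where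
  "Xmat n \<mu> F I J = F I J - mconst (\<integral>z. mpeval (F I J) z \<partial>(Zlaw n \<mu>))"

definition Xk :: "nat \<Rightarrow> nat \<Rightarrow> (nat \<Rightarrow> real measure) \<Rightarrow> ('i \<Rightarrow> 'j \<Rightarrow> mpoly) \<Rightarrow> nat \<Rightarrow> 'i \<Rightarrow> 'j \<Rightarrow> mpoly" where
  "Xk n dp \<mu> F k I J = (\<Sum>\<alpha>\<in>{\<alpha>\<in>MI n dp. msupp \<alpha> = k}.
      mconst (fhat n dp \<mu> (Xmat n \<mu> F I J) \<alpha>) * chi \<mu> \<alpha>)"

definition Kset :: "nat \<Rightarrow> nat \<Rightarrow> (mindex \<times> mindex) set" where
  "Kset n dp = {(\<alpha>, \<gamma>). Poly_Mapping.keys \<alpha> \<subseteq> {..<n} \<and> mdeg \<alpha> \<le> dp \<and>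
      (\<forall>i. Poly_Mapping.lookup \<gamma> i \<le> 1) \<and> (\<forall>i. Poly_Mapping.lookup \<gamma> i \<le> Poly_Mapping.lookup \<alpha> i)}"

definition Ddiag :: "nat \<Rightarrow> (nat \<Rightarrow> real measure) \<Rightarrow> (nat \<Rightarrow> real) \<Rightarrow> 'i \<times> (mindex \<times> mindex) \<Rightarrow> real" where
  "Ddiag n \<mu> z r = (case r of (I, \<alpha>, \<gamma>) \<Rightarrow>
     sqrt (\<integral>w. (\<Prod>i<n. w i ^ (2 * Poly_Mapping.lookup \<alpha> i * (1 - Poly_Mapping.lookup \<gamma> i))) \<partial>(Zlaw n \<mu>))
       * (\<Prod>i<n. z i ^ (Poly_Mapping.lookup \<alpha> i * Poly_Mapping.lookup \<gamma> i)))"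

definition diagmat :: "('r \<Rightarrow> real) \<Rightarrow> 'r \<Rightarrow> 'r \<Rightarrow> real" where
  "diagmat d r s = (if r = s then d r else 0)"

definition mmult :: "'m set \<Rightarrow> ('r \<Rightarrow> 'm \<Rightarrow> real) \<Rightarrow> ('m \<Rightarrow> 'c \<Rightarrow> real) \<Rightarrow> 'r \<Rightarrow> 'c \<Rightarrow> real" where
  "mmult S A B r c = (\<Sum>m\<in>S. A r m * B m c)"

definition Gmat :: "nat \<Rightarrow> nat \<Rightarrow> (nat \<Rightarrow> real measure) \<Rightarrow> ('i \<Rightarrow> 'j \<Rightarrow> mpoly) \<Rightarrow> nat \<Rightarrow> nat \<Rightarrow> nat
    \<Rightarrow> 'i \<times> (mindex \<times> mindex) \<Rightarrow> 'j \<times> (mindex \<times> mindex) \<Rightarrow> mpoly" where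
  "Gmat n dp \<mu> F k a b r c = (case r of (I, \<alpha>1, \<gamma>1) \<Rightarrow> case c of (J, \<alpha>2, \<gamma>2) \<Rightarrow>
     if msupp \<alpha>1 = a \<and> msupp \<alpha>2 = b \<and> (\<forall>i. Poly_Mapping.lookup \<alpha>1 i * Poly_Mapping.lookup \<alpha>2 i = 0)
     then nabla (\<alpha>1 + \<alpha>2) (Xk n dp \<mu> F k I J) else 0)"

definition Gval where
  "Gval n dp \<mu> F k a b z r c = mpeval (Gmat n dp \<mu> F k a b r c) z"

definition Kker where
  "Kker n dp \<mu> F k a b z z' r c =
     mpeval (Linv n dp \<mu> (Gmat n dp \<mu> F k a b r c)) z - mpeval (Linv n dp \<mu> (Gmat n dp \<mu> F k a b r c)) z'"

end

theory Submission
  imports Defs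
begin


abbreviation lk where "lk \<equiv> Poly_Mapping.lookup"
abbreviation ks where "ks \<equiv> Poly_Mapping.keys"
abbreviation sg where "sg \<equiv> Poly_Mapping.single"

definition mon :: "mindex \<Rightarrow> (nat \<Rightarrow> real) \<Rightarrow> real" where
  "mon \<beta> z = (\<Prod>i\<in>ks \<beta>. z i ^ lk \<beta> i)"

lemma mon_superset: "finite A \<Longrightarrow> ks \<beta> \<subseteq> A \<Longrightarrow> mon \<beta> z = (\<Prod>i\<in>A. z i ^ lk \<beta> i)"
  unfolding mon_def by (rule prod.mono_neutral_left) (auto simp: in_keys_iff)

lemma mon_add: "mon (\<beta> + \<gamma>) z = mon \<beta> z * mon \<gamma> z"
proof -
  let ?A = "ks \<beta> \<union> ks \<gamma>"
  have "mon (\<beta> + \<gamma>) z = (\<Prod>i\<in>?A. z i ^ lk (\<beta>+\<gamma>) i)"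
    by (rule mon_superset) (use Poly_Mapping.keys_add[of \<beta> \<gamma>] in auto)
  also have "\<dots> = (\<Prod>i\<in>?A. z i ^ lk \<beta> i) * (\<Prod>i\<in>?A. z i ^ lk \<gamma> i)"
    by (simp add: lookup_add power_add prod.distrib)
  also have "\<dots> = mon \<beta> z * mon \<gamma> z"
    by (simp add: mon_superset[of ?A])
  finally show ?thesis .
qed

lemma mon_single: "mon (sg a e) z = z a ^ e"
  by (simp add: mon_def)

lemma mon_zero: "mon 0 z = 1" by (simp add: mon_def)

lemma mpeval_mon: "mpeval p z = (\<Sum>\<beta>\<in>ks p. lk p \<beta> * mon \<beta> z)"
  by (simp add: mpeval_def mon_def)

lemma mpeval_superset: "finite A \<Longrightarrow> ks p \<subseteq> A \<Longrightarrow> mpeval p z = (\<Sum>\<beta>\<in>A. lk p \<beta> * mon \<beta> z)"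
  unfolding mpeval_mon by (rule sum.mono_neutral_left) (auto simp: in_keys_iff)

lemma mpeval_add: "mpeval (p + q) z = mpeval p z + mpeval q z"
proof -
  let ?A = "ks p \<union> ks q"
  have "mpeval (p+q) z = (\<Sum>\<beta>\<in>?A. lk (p+q) \<beta> * mon \<beta> z)"
    by (rule mpeval_superset) (use Poly_Mapping.keys_add[of p q] in auto)
  also have "\<dots> = (\<Sum>\<beta>\<in>?A. lk p \<beta> * mon \<beta> z) + (\<Sum>\<beta>\<in>?A. lk q \<beta> * mon \<beta> z)"
    by (simp add: lookup_add distrib_right sum.distrib)
  also have "\<dots> = mpeval p z + mpeval q z" by (simp add: mpeval_superset[of ?A])
  finally show ?thesis .
qed

lemma mpeval_zero: "mpeval 0 z = 0" by (simp add: mpeval_def)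

lemma mpeval_uminus: "mpeval (- p) z = - mpeval p z"
  by (simp add: mpeval_def sum_negf)

lemma mpeval_diff: "mpeval (p - q) z = mpeval p z - mpeval q z"
  using mpeval_add[of p "-q" z] by (simp add: mpeval_uminus)

lemma mpeval_sum: "mpeval (\<Sum>j\<in>J. f j) z = (\<Sum>j\<in>J. mpeval (f j) z)"
  by (induction J rule: infinite_finite_induct) (auto simp: mpeval_zero mpeval_add)

lemma mpeval_single: "mpeval (sg \<beta> c) z = c * mon \<beta> z"
  by (simp add: mpeval_mon)

lemma pm_expand: "(p::mpoly) = (\<Sum>\<gamma>\<in>ks p. sg \<gamma> (lk p \<gamma>))"
  by (rule poly_mapping_eqI) (auto simp: lookup_sum lookup_single when_def in_keys_iff)

lemma single_mult_expand: "sg \<delta> c * (p::mpoly) = (\<Sum>\<gamma>\<in>ks p. sg (\<delta> + \<gamma>) (c * lk p \<gamma>))"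
  by (subst pm_expand[of p]) (simp add: sum_distrib_left mult_single)

lemma mpeval_single_mult: "mpeval (sg \<delta> c * p) z = c * mon \<delta> z * mpeval p z"
  unfolding single_mult_expand mpeval_sum mpeval_single
  by (simp add: mon_add mpeval_mon sum_distrib_left mult_ac)

lemma lookup_single_mult:
  "lk (sg \<delta> c * (p::mpoly)) \<gamma> = (if \<exists>q. \<gamma> = \<delta> + q then c * lk p (\<gamma> - \<delta>) else 0)"
proof -
  have "lk (sg \<delta> c * p) \<gamma> = (\<Sum>g\<in>ks p. if \<delta> + g = \<gamma> then c * lk p g else 0)"
    by (simp add: single_mult_expand lookup_sum lookup_single when_def)
  also have "\<dots> = (if \<exists>q. \<gamma> = \<delta> + q then c * lk p (\<gamma> - \<delta>) else 0)"
  proof (cases "\<exists>q. \<gamma> = \<delta> + q")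
    case True
    then obtain q where q: "\<gamma> = \<delta> + q" by blast
    have "(\<Sum>g\<in>ks p. if \<delta> + g = \<gamma> then c * lk p g else 0) = (\<Sum>g\<in>ks p. if g = q then c * lk p g else 0)"
      using q by (intro sum.cong) auto
    also have "\<dots> = c * lk p q" by (auto simp: in_keys_iff)
    finally show ?thesis using q True by simp
  next
    case False then show ?thesis by (auto intro!: sum.neutral)
  qed
  finally show ?thesis .
qed

lemma lookup_mconst_mult: "lk (mconst c * p) \<gamma> = c * lk p \<gamma>"
  by (simp add: mconst_def lookup_single_mult)

lemma mpeval_mconst_mult: "mpeval (mconst c * p) z = c * mpeval p z"
  by (simp add: mconst_def mpeval_single_mult mon_zero)

lemma mconst_mult: "mconst a * mconst b = mconst (a * b)"
  by (simp add: mconst_def mult_single)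



lemma chiprod_lookup:
  fixes \<gamma> :: mindex and e :: "nat \<Rightarrow> nat" and m :: "nat \<Rightarrow> real"
  assumes "finite A" "\<forall>i\<in>A. 0 < e i"
  shows "lk (\<Prod>i\<in>A. sg (sg i (e i)) (1::real) - sg 0 (m i)) \<gamma> =
    (if ks \<gamma> \<subseteq> A \<and> (\<forall>i\<in>ks \<gamma>. lk \<gamma> i = e i) then (\<Prod>i\<in>A - ks \<gamma>. - m i) else 0)"
  using assms
proof (induction A arbitrary: \<gamma> rule: finite_induct)
  case empty
  then show ?case by (auto simp: lookup_one when_def)
next
  case (insert a A)
  define P where "P = (\<Prod>i\<in>A. sg (sg i (e i)) (1::real) - sg 0 (m i))"
  define \<delta> :: mindex where "\<delta> = sg a (e a)"
  have IH: "\<And>g. lk P g = (if ks g \<subseteq> A \<and> (\<forall>i\<in>ks g. lk g i = e i) then (\<Prod>i\<in>A - ks g. - m i) else 0)"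
    using insert by (simp add: P_def)
  have ea: "0 < e a" using insert by simp
  have "(\<Prod>i\<in>insert a A. sg (sg i (e i)) (1::real) - sg 0 (m i)) = sg \<delta> 1 * P - sg 0 (m a) * P"
    using insert by (simp add: P_def \<delta>_def left_diff_distrib)
  then have L: "lk (\<Prod>i\<in>insert a A. sg (sg i (e i)) (1::real) - sg 0 (m i)) \<gamma> =
      (if \<exists>q. \<gamma> = \<delta> + q then lk P (\<gamma> - \<delta>) else 0) - m a * lk P \<gamma>"
    by (simp add: lookup_minus lookup_single_mult)
  have d_a: "lk \<delta> a = e a" and d_i: "\<And>i. i \<noteq> a \<Longrightarrow> lk \<delta> i = 0"
    by (auto simp: \<delta>_def lookup_single when_def)
  show ?case
  proof (cases "a \<in> ks \<gamma>")
    case True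
    have P0: "lk P \<gamma> = 0" using IH[of \<gamma>] True insert(2) by auto
    show ?thesis
    proof (cases "ks \<gamma> \<subseteq> insert a A \<and> (\<forall>i\<in>ks \<gamma>. lk \<gamma> i = e i)")
      case c: True
      define q where "q = \<gamma> - \<delta>"
      have ga: "lk \<gamma> a = e a" using c True by auto
      have gq: "\<gamma> = \<delta> + q"
      proof (rule poly_mapping_eqI)
        fix k show "lk \<gamma> k = lk (\<delta> + q) k"
          by (cases "k = a") (auto simp: q_def lookup_add lookup_minus d_i ga d_a)
      qed
      have lq: "\<And>i. lk q i = (if i = a then 0 else lk \<gamma> i)"
        by (auto simp: q_def lookup_minus d_i ga d_a)
      have kq: "ks q = ks \<gamma> - {a}" by (rule set_eqI) (simp add: in_keys_iff lq)
      have cq: "ks q \<subseteq> A \<and> (\<forall>i\<in>ks q. lk q i = e i)" using c kq lq by auto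
      have "A - ks q = insert a A - ks \<gamma>" using kq True insert(2) by auto
      moreover have "\<exists>q. \<gamma> = \<delta> + q" using gq by blast
      ultimately show ?thesis using c cq IH[of q] P0 L by (simp add: q_def[symmetric])
    next
      case c: False
      have "lk P (\<gamma> - \<delta>) = 0" if "\<gamma> = \<delta> + q" for q
      proof -
        have lg: "\<And>i. lk (\<gamma> - \<delta>) i = lk q i" using that by (simp add: lookup_minus lookup_add)
        { assume cq: "ks (\<gamma> - \<delta>) \<subseteq> A \<and> (\<forall>i\<in>ks (\<gamma> - \<delta>). lk (\<gamma> - \<delta>) i = e i)"
          have "lk q a = 0" using cq insert(2) lg by (metis in_keys_iff subsetD)
          then have g1: "lk \<gamma> a = e a" using that by (simp add: lookup_add d_a)
          have "ks \<gamma> \<subseteq> insert a A \<and> (\<forall>i\<in>ks \<gamma>. lk \<gamma> i = e i)"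
          proof (intro conjI ballI subsetI)
            fix i assume i: "i \<in> ks \<gamma>"
            show "i \<in> insert a A"
            proof (cases "i = a")
              case False
              then have "lk (\<gamma> - \<delta>) i = lk \<gamma> i" by (simp add: lookup_minus d_i)
              then have "i \<in> ks (\<gamma> - \<delta>)" using i by (simp add: in_keys_iff)
              then show ?thesis using cq by blast
            qed simp
          next
            fix i assume i: "i \<in> ks \<gamma>"
            show "lk \<gamma> i = e i"
            proof (cases "i = a")
              case False
              then have "lk (\<gamma> - \<delta>) i = lk \<gamma> i" by (simp add: lookup_minus d_i)
              moreover then have "i \<in> ks (\<gamma> - \<delta>)" using i by (simp add: in_keys_iff)
              ultimately show ?thesis using cq by auto
            qed (use g1 in simp)
          qed
          with c have False by blast }
        then show ?thesis using IH[of "\<gamma> - \<delta>"] by auto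
      qed
      then show ?thesis using L P0 c by auto
    qed
  next
    case False
    then have ga: "lk \<gamma> a = 0" by (simp add: in_keys_iff)
    have nq: "\<not> (\<exists>q. \<gamma> = \<delta> + q)"
    proof
      assume "\<exists>q. \<gamma> = \<delta> + q"
      then obtain q where "\<gamma> = \<delta> + q" by blast
      then have "lk \<gamma> a = e a + lk q a" by (simp add: lookup_add d_a)
      with ga ea show False by simp
    qed
    have eqc: "(ks \<gamma> \<subseteq> insert a A) = (ks \<gamma> \<subseteq> A)" using False by auto
    have "insert a A - ks \<gamma> = insert a (A - ks \<gamma>)" using False by auto
    then have pr: "(\<Prod>i\<in>insert a A - ks \<gamma>. - m i) = - m a * (\<Prod>i\<in>A - ks \<gamma>. - m i)"
      using insert(1,2) by simp
    show ?thesis using L nq IH[of \<gamma>] eqc pr by auto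
  qed
qed

lemma chiprod_mpeval:
  fixes e :: "nat \<Rightarrow> nat" and m :: "nat \<Rightarrow> real"
  assumes "finite A"
  shows "mpeval (\<Prod>i\<in>A. sg (sg i (e i)) (1::real) - sg 0 (m i)) z = (\<Prod>i\<in>A. z i ^ e i - m i)"
  using assms
proof (induction A rule: finite_induct)
  case empty
  then show ?case by (simp add: mpeval_mon lookup_one when_def mon_zero)
next
  case (insert a A)
  then show ?case
    by (simp add: left_diff_distrib mpeval_diff mpeval_single_mult mon_single mon_zero)
qed

lemma chi_eq: "chi \<mu> \<beta> = (\<Prod>i\<in>ks \<beta>. sg (sg i (lk \<beta> i)) (1::real) - sg 0 (mom \<mu> i (lk \<beta> i)))"
  by (simp add: chi_def mmonom_def mconst_def)

lemma chi_lookup: "lk (chi \<mu> \<beta>) \<gamma> = (if munlhd \<gamma> \<beta> then (\<Prod>i\<in>ks \<beta> - ks \<gamma>. - mom \<mu> i (lk \<beta> i)) else 0)"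
proof -
  have "(ks \<gamma> \<subseteq> ks \<beta> \<and> (\<forall>i\<in>ks \<gamma>. lk \<gamma> i = lk \<beta> i)) = munlhd \<gamma> \<beta>"
    unfolding munlhd_def by (auto simp: in_keys_iff)
  then show ?thesis unfolding chi_eq
    by (subst chiprod_lookup) (auto simp: in_keys_iff)
qed

lemma chi_mpeval: "mpeval (chi \<mu> \<beta>) z = (\<Prod>i\<in>ks \<beta>. z i ^ lk \<beta> i - mom \<mu> i (lk \<beta> i))"
  unfolding chi_eq by (simp add: chiprod_mpeval)



lemma munlhd_minus_iff:
  fixes \<alpha> \<beta> \<gamma> :: mindex
  shows "(munlhd \<alpha> \<beta> \<and> \<beta> - \<alpha> = \<gamma>) \<longleftrightarrow> (\<beta> = \<gamma> + \<alpha> \<and> (\<forall>i. lk \<alpha> i = 0 \<or> lk \<gamma> i = 0))"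
proof
  assume h: "munlhd \<alpha> \<beta> \<and> \<beta> - \<alpha> = \<gamma>"
  then have g: "\<And>i. lk \<gamma> i = lk \<beta> i - lk \<alpha> i" by (auto simp: lookup_minus)
  have m: "\<And>i. lk \<alpha> i = 0 \<or> lk \<alpha> i = lk \<beta> i" using h by (auto simp: munlhd_def)
  have "\<beta> = \<gamma> + \<alpha>"
  proof (rule poly_mapping_eqI)
    fix i show "lk \<beta> i = lk (\<gamma> + \<alpha>) i" using m[of i] g[of i] by (auto simp: lookup_add)
  qed
  moreover have "\<forall>i. lk \<alpha> i = 0 \<or> lk \<gamma> i = 0" using m g by (metis diff_self_eq_0)
  ultimately show "\<beta> = \<gamma> + \<alpha> \<and> (\<forall>i. lk \<alpha> i = 0 \<or> lk \<gamma> i = 0)" by blast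
next
  assume h: "\<beta> = \<gamma> + \<alpha> \<and> (\<forall>i. lk \<alpha> i = 0 \<or> lk \<gamma> i = 0)"
  have "munlhd \<alpha> \<beta>" using h by (auto simp: munlhd_def lookup_add)
  moreover have "\<beta> - \<alpha> = \<gamma>" using h by simp
  ultimately show "munlhd \<alpha> \<beta> \<and> \<beta> - \<alpha> = \<gamma>" by blast
qed

definition mdisj :: "mindex \<Rightarrow> mindex \<Rightarrow> bool" where
  "mdisj \<alpha> \<gamma> \<longleftrightarrow> (\<forall>i. lk \<alpha> i = 0 \<or> lk \<gamma> i = 0)"

lemma nabla_lookup:
  "lk (nabla \<alpha> p) \<gamma> = (if mdisj \<alpha> \<gamma> then lk p (\<gamma> + \<alpha>) else 0)"
proof -
  have "lk (nabla \<alpha> p) \<gamma> = (\<Sum>\<beta>\<in>ks p. if munlhd \<alpha> \<beta> \<and> \<beta> - \<alpha> = \<gamma> then lk p \<beta> else 0)"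
    by (auto simp: nabla_def lookup_sum lookup_single when_def if_distrib[of "\<lambda>x. lk x \<gamma>"]
        intro!: sum.cong)
  also have "\<dots> = (\<Sum>\<beta>\<in>ks p. if \<beta> = \<gamma> + \<alpha> \<and> mdisj \<alpha> \<gamma> then lk p \<beta> else 0)"
    by (simp only: munlhd_minus_iff[folded mdisj_def])
  also have "\<dots> = (if mdisj \<alpha> \<gamma> then lk p (\<gamma> + \<alpha>) else 0)"
    by (cases "mdisj \<alpha> \<gamma>") (auto simp: in_keys_iff)
  finally show ?thesis .
qed

lemma nabla_add: "nabla \<alpha> (p + q) = nabla \<alpha> p + nabla \<alpha> q"
  by (rule poly_mapping_eqI) (auto simp: nabla_lookup lookup_add)

lemma nabla_zero: "nabla \<alpha> 0 = 0"
  by (rule poly_mapping_eqI) (simp add: nabla_lookup)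

lemma nabla_sum: "nabla \<alpha> (\<Sum>j\<in>J. f j) = (\<Sum>j\<in>J. nabla \<alpha> (f j))"
  by (rule poly_mapping_eqI) (auto simp: nabla_lookup lookup_sum)

lemma nabla_mconst_mult: "nabla \<alpha> (mconst c * p) = mconst c * nabla \<alpha> p"
  by (rule poly_mapping_eqI) (auto simp: nabla_lookup lookup_mconst_mult)

lemma nabla_chi: "nabla \<alpha> (chi \<mu> \<beta>) = (if munlhd \<alpha> \<beta> then chi \<mu> (\<beta> - \<alpha>) else 0)"
proof (rule poly_mapping_eqI)
  fix \<gamma>
  have iff: "(mdisj \<alpha> \<gamma> \<and> munlhd (\<gamma> + \<alpha>) \<beta>) \<longleftrightarrow> (munlhd \<alpha> \<beta> \<and> munlhd \<gamma> (\<beta> - \<alpha>))"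
    unfolding munlhd_def mdisj_def lookup_add lookup_minus by (metis add.commute add.right_neutral diff_self_eq_0 diff_zero)
  have sets: "ks \<beta> - ks (\<gamma> + \<alpha>) = ks (\<beta> - \<alpha>) - ks \<gamma>" if "munlhd \<alpha> \<beta>"
    using that unfolding munlhd_def by (auto simp: in_keys_iff lookup_add lookup_minus) (metis le_refl neq0_conv)
  have vals: "\<And>i. i \<in> ks (\<beta> - \<alpha>) - ks \<gamma> \<Longrightarrow> lk (\<beta> - \<alpha>) i = lk \<beta> i" if "munlhd \<alpha> \<beta>"
    using that unfolding munlhd_def by (auto simp: in_keys_iff lookup_add lookup_minus) (metis diff_zero le_refl)
  show "lk (nabla \<alpha> (chi \<mu> \<beta>)) \<gamma> = lk (if munlhd \<alpha> \<beta> then chi \<mu> (\<beta> - \<alpha>) else 0) \<gamma>"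
  proof (cases "munlhd \<alpha> \<beta>")
    case True
    then show ?thesis using iff sets[OF True] vals[OF True]
      by (auto simp: nabla_lookup chi_lookup intro!: prod.cong)
  next
    case False
    then show ?thesis using iff by (auto simp: nabla_lookup chi_lookup)
  qed
qed



lemma lookup_le_mdeg: "lk \<alpha> i \<le> mdeg \<alpha>"
proof (cases "i \<in> ks \<alpha>")
  case True then show ?thesis unfolding mdeg_def by (intro member_le_sum) auto
qed (simp add: in_keys_iff)

lemma finite_MI: "finite (MI n dp)"
proof -
  let ?f = "\<lambda>\<alpha>::mindex. restrict (lk \<alpha>) {..<n}"
  have inj: "inj_on ?f (MI n dp)"
  proof (rule inj_onI)
    fix x y assume x: "x \<in> MI n dp" and y: "y \<in> MI n dp" and e: "?f x = ?f y"
    show "x = y"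
    proof (rule poly_mapping_eqI)
      fix i show "lk x i = lk y i"
      proof (cases "i < n")
        case True then show ?thesis using fun_cong[OF e, of i] by simp
      next
        case False
        then have "i \<notin> ks x" "i \<notin> ks y" using x y by (auto simp: MI_def)
        then show ?thesis by (simp add: in_keys_iff)
      qed
    qed
  qed
  have "?f ` MI n dp \<subseteq> PiE {..<n} (\<lambda>_. {..dp})"
    unfolding MI_def by (auto intro: order_trans[OF lookup_le_mdeg] split: if_splits)
  then have "finite (?f ` MI n dp)" by (rule finite_subset) (intro finite_PiE; simp)
  then show ?thesis using finite_imageD inj by blast
qed

lemma mdeg_less: assumes "munlhd \<alpha> \<beta>" "\<alpha> \<noteq> \<beta>" shows "mdeg \<alpha> < mdeg \<beta>"
proof -
  have sub: "ks \<alpha> \<subseteq> ks \<beta>" using assms(1) by (auto simp: munlhd_def in_keys_iff)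
  have eq: "\<And>i. i \<in> ks \<alpha> \<Longrightarrow> lk \<alpha> i = lk \<beta> i" using assms(1) unfolding munlhd_def by (metis in_keys_iff)
  have "ks \<alpha> \<noteq> ks \<beta>"
  proof
    assume ke: "ks \<alpha> = ks \<beta>"
    have "\<alpha> = \<beta>"
    proof (rule poly_mapping_eqI)
      fix i show "lk \<alpha> i = lk \<beta> i"
        using eq[of i] ke by (cases "i \<in> ks \<alpha>") (auto simp: in_keys_iff)
    qed
    with assms(2) show False by simp
  qed
  then obtain j where j: "j \<in> ks \<beta> - ks \<alpha>" using sub by blast
  have "mdeg \<beta> = (\<Sum>i\<in>ks \<beta> - ks \<alpha>. lk \<beta> i) + (\<Sum>i\<in>ks \<alpha>. lk \<beta> i)"
    unfolding mdeg_def using sub by (simp add: sum.subset_diff)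
  moreover have "(\<Sum>i\<in>ks \<beta> - ks \<alpha>. lk \<beta> i) > 0"
    using j by (subst sum_pos2[of _ j]) (auto simp: in_keys_iff)
  moreover have "(\<Sum>i\<in>ks \<alpha>. lk \<beta> i) = mdeg \<alpha>" unfolding mdeg_def using eq by simp
  ultimately show ?thesis by simp
qed

lemma mconst_sum: "mconst (\<Sum>j\<in>J. f j) = (\<Sum>j\<in>J. mconst (f j))"
  by (induction J rule: infinite_finite_induct) (auto simp: mconst_def single_add)

lemma lookup_mconst: "lk (mconst c) \<alpha> = (if \<alpha> = 0 then c else 0)"
  by (simp add: mconst_def lookup_single when_def)

lemma munlhd_refl: "munlhd \<alpha> \<alpha>" by (simp add: munlhd_def)

lemma chi_indep:
  assumes fin: "finite M" and M0: "0 \<notin> M"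
    and eq: "mconst c + (\<Sum>\<alpha>\<in>M. mconst (d \<alpha>) * chi \<mu> \<alpha>) = 0"
  shows "\<forall>\<alpha>\<in>M. d \<alpha> = 0"
proof (rule ccontr)
  assume "\<not> (\<forall>\<alpha>\<in>M. d \<alpha> = 0)"
  then have ne: "{\<alpha>\<in>M. d \<alpha> \<noteq> 0} \<noteq> {}" by auto
  have finS: "finite {\<alpha>\<in>M. d \<alpha> \<noteq> 0}" using fin by simp
  define D where "D = Max (mdeg ` {\<alpha>\<in>M. d \<alpha> \<noteq> 0})"
  have "D \<in> mdeg ` {\<alpha>\<in>M. d \<alpha> \<noteq> 0}" unfolding D_def using ne finS by (intro Max_in) auto
  then obtain \<alpha> where a: "\<alpha> \<in> M" "d \<alpha> \<noteq> 0" "mdeg \<alpha> = D" by auto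
  have mx: "\<And>\<beta>. \<beta> \<in> M \<Longrightarrow> d \<beta> \<noteq> 0 \<Longrightarrow> mdeg \<beta> \<le> D"
    unfolding D_def using finS by (intro Max_ge) auto
  have "lk (mconst c + (\<Sum>\<alpha>\<in>M. mconst (d \<alpha>) * chi \<mu> \<alpha>)) \<alpha> = (\<Sum>\<beta>\<in>M. d \<beta> * lk (chi \<mu> \<beta>) \<alpha>)"
    using a M0 by (auto simp: lookup_add lookup_sum lookup_mconst_mult lookup_mconst)
  also have "\<dots> = (\<Sum>\<beta>\<in>M. if \<beta> = \<alpha> then d \<alpha> else 0)"
  proof (rule sum.cong)
    fix \<beta> assume b: "\<beta> \<in> M"
    show "d \<beta> * lk (chi \<mu> \<beta>) \<alpha> = (if \<beta> = \<alpha> then d \<alpha> else 0)"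
    proof (cases "\<beta> = \<alpha>")
      case True then show ?thesis by (simp add: chi_lookup munlhd_refl)
    next
      case False
      show ?thesis
      proof (cases "d \<beta> = 0 \<or> \<not> munlhd \<alpha> \<beta>")
        case True then show ?thesis using False by (auto simp: chi_lookup)
      next
        case c: False
        then have "mdeg \<alpha> < mdeg \<beta>" using mdeg_less False by metis
        with mx[OF b] c a(3) show ?thesis by simp
      qed
    qed
  qed simp
  also have "\<dots> = d \<alpha>" using a fin by simp
  finally show False using eq a(2) by simp
qed

lemma fhat_rep:
  assumes finJ: "finite J" and phi: "\<And>j. j \<in> J \<Longrightarrow> \<phi> j \<in> MI n dp"
    and f: "f = (\<Sum>j\<in>J. mconst (c j) * chi \<mu> (\<phi> j))"
  shows "fhat n dp \<mu> f = (\<lambda>\<alpha>. if \<alpha> \<in> MI n dp then (\<Sum>j\<in>{j\<in>J. \<phi> j = \<alpha>}. c j) else 0)"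
    (is "_ = ?h")
proof -
  have rep: "f = mconst 0 + (\<Sum>\<alpha>\<in>MI n dp. mconst (?h \<alpha>) * chi \<mu> \<alpha>)"
  proof -
    have "(\<Sum>\<alpha>\<in>MI n dp. mconst (?h \<alpha>) * chi \<mu> \<alpha>) =
          (\<Sum>\<alpha>\<in>MI n dp. \<Sum>j\<in>{j\<in>J. \<phi> j = \<alpha>}. mconst (c j) * chi \<mu> (\<phi> j))"
    proof (rule sum.cong)
      fix \<alpha> assume "\<alpha> \<in> MI n dp"
      have "mconst (\<Sum>j\<in>{j\<in>J. \<phi> j = \<alpha>}. c j) = (\<Sum>j\<in>{j\<in>J. \<phi> j = \<alpha>}. mconst (c j))"
        by (rule mconst_sum)
      then show "mconst (?h \<alpha>) * chi \<mu> \<alpha> = (\<Sum>j\<in>{j\<in>J. \<phi> j = \<alpha>}. mconst (c j) * chi \<mu> (\<phi> j))"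
        using \<open>\<alpha> \<in> MI n dp\<close> by (simp add: sum_distrib_right)
    qed simp
    also have "\<dots> = f" unfolding f
      by (rule sum.group) (use finJ finite_MI phi in auto)
    finally show ?thesis by (simp add: mconst_def)
  qed
  show ?thesis unfolding fhat_def
  proof (rule the_equality)
    show "(\<forall>\<alpha>. \<alpha> \<notin> MI n dp \<longrightarrow> ?h \<alpha> = 0) \<and> (\<exists>c. f = mconst c + (\<Sum>\<alpha>\<in>MI n dp. mconst (?h \<alpha>) * chi \<mu> \<alpha>))"
      using rep by auto
  next
    fix h assume h: "(\<forall>\<alpha>. \<alpha> \<notin> MI n dp \<longrightarrow> h \<alpha> = 0) \<and> (\<exists>c. f = mconst c + (\<Sum>\<alpha>\<in>MI n dp. mconst (h \<alpha>) * chi \<mu> \<alpha>))"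
    then obtain c' where c': "f = mconst c' + (\<Sum>\<alpha>\<in>MI n dp. mconst (h \<alpha>) * chi \<mu> \<alpha>)" by blast
    have E: "mconst c' + (\<Sum>\<alpha>\<in>MI n dp. mconst (h \<alpha>) * chi \<mu> \<alpha>) = mconst 0 + (\<Sum>\<alpha>\<in>MI n dp. mconst (?h \<alpha>) * chi \<mu> \<alpha>)"
      using c' rep by simp
    have "mconst (c' - 0) + (\<Sum>\<alpha>\<in>MI n dp. mconst (h \<alpha> - ?h \<alpha>) * chi \<mu> \<alpha>) =
        (mconst c' + (\<Sum>\<alpha>\<in>MI n dp. mconst (h \<alpha>) * chi \<mu> \<alpha>)) - (mconst 0 + (\<Sum>\<alpha>\<in>MI n dp. mconst (?h \<alpha>) * chi \<mu> \<alpha>))"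
      by (simp only: mconst_def single_diff left_diff_distrib sum_subtractf) (simp add: algebra_simps)
    also have "\<dots> = 0" using E by simp
    finally have "mconst (c' - 0) + (\<Sum>\<alpha>\<in>MI n dp. mconst (h \<alpha> - ?h \<alpha>) * chi \<mu> \<alpha>) = 0" .
    then have "\<forall>\<alpha>\<in>MI n dp. h \<alpha> - ?h \<alpha> = 0"
      by (intro chi_indep[OF finite_MI]) (auto simp: MI_def)
    then show "h = ?h" using h by (auto simp: fun_eq_iff)
  qed
qed

lemma Linv_rep:
  assumes finJ: "finite J" and phi: "\<And>j. j \<in> J \<Longrightarrow> \<phi> j \<in> MI n dp"
    and supp: "\<And>j. j \<in> J \<Longrightarrow> msupp (\<phi> j) = m"
    and f: "f = (\<Sum>j\<in>J. mconst (c j) * chi \<mu> (\<phi> j))"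
  shows "Linv n dp \<mu> f = mconst (real n / real m) * f"
proof -
  let ?h = "\<lambda>\<alpha>. if \<alpha> \<in> MI n dp then (\<Sum>j\<in>{j\<in>J. \<phi> j = \<alpha>}. c j) else 0"
  have rep: "f = (\<Sum>\<alpha>\<in>MI n dp. mconst (?h \<alpha>) * chi \<mu> \<alpha>)"
  proof -
    have "(\<Sum>\<alpha>\<in>MI n dp. mconst (?h \<alpha>) * chi \<mu> \<alpha>) =
          (\<Sum>\<alpha>\<in>MI n dp. \<Sum>j\<in>{j\<in>J. \<phi> j = \<alpha>}. mconst (c j) * chi \<mu> (\<phi> j))"
    proof (rule sum.cong)
      fix \<alpha> assume "\<alpha> \<in> MI n dp"
      have "mconst (\<Sum>j\<in>{j\<in>J. \<phi> j = \<alpha>}. c j) = (\<Sum>j\<in>{j\<in>J. \<phi> j = \<alpha>}. mconst (c j))"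
        by (rule mconst_sum)
      then show "mconst (?h \<alpha>) * chi \<mu> \<alpha> = (\<Sum>j\<in>{j\<in>J. \<phi> j = \<alpha>}. mconst (c j) * chi \<mu> (\<phi> j))"
        using \<open>\<alpha> \<in> MI n dp\<close> by (simp add: sum_distrib_right)
    qed simp
    also have "\<dots> = f" unfolding f
      by (rule sum.group) (use finJ finite_MI phi in auto)
    finally show ?thesis by simp
  qed
  have "Linv n dp \<mu> f = (\<Sum>\<alpha>\<in>MI n dp. mconst (real n / real m) * (mconst (?h \<alpha>) * chi \<mu> \<alpha>))"
    unfolding Linv_def
  proof (rule sum.cong)
    fix \<alpha> assume a: "\<alpha> \<in> MI n dp"
    have fh: "fhat n dp \<mu> f \<alpha> = ?h \<alpha>" by (simp add: fhat_rep[OF finJ phi f])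
    show "mconst (real n / real (msupp \<alpha>) * fhat n dp \<mu> f \<alpha>) * chi \<mu> \<alpha> = mconst (real n / real m) * (mconst (?h \<alpha>) * chi \<mu> \<alpha>)"
    proof (cases "?h \<alpha> = 0")
      case True then show ?thesis using a by (simp add: mconst_def fh)
    next
      case False
      then have "{j\<in>J. \<phi> j = \<alpha>} \<noteq> {}" using a by (metis (no_types, lifting) sum.empty)
      then obtain j where "j \<in> J" "\<phi> j = \<alpha>" by blast
      then have "msupp \<alpha> = m" using supp by auto
      then show ?thesis using a by (simp add: mconst_mult mult.assoc[symmetric] fh)
    qed
  qed simp
  also have "\<dots> = mconst (real n / real m) * f"
    by (simp only: sum_distrib_left[symmetric] rep[symmetric])
  finally show ?thesis .
qed



lemma chi_int:
  assumes P: "prob_space (\<mu> i)" and I: "\<And>m. integrable (\<mu> i) (\<lambda>t. t ^ m)"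
  shows "integrable (\<mu> i) (\<lambda>t. mpeval (chi \<mu> \<gamma>) (z(i := t)))"
    and "(\<integral>t. mpeval (chi \<mu> \<gamma>) (z(i := t)) \<partial>(\<mu> i)) = (if i \<in> ks \<gamma> then 0 else mpeval (chi \<mu> \<gamma>) z)"
proof -
  interpret prob_space "\<mu> i" by (rule P)
  have one: "measure (\<mu> i) (space (\<mu> i)) = 1" by (rule prob_space)
  have "integrable (\<mu> i) (\<lambda>t. mpeval (chi \<mu> \<gamma>) (z(i := t))) \<and>
    (\<integral>t. mpeval (chi \<mu> \<gamma>) (z(i := t)) \<partial>(\<mu> i)) = (if i \<in> ks \<gamma> then 0 else mpeval (chi \<mu> \<gamma>) z)"
  proof (cases "i \<in> ks \<gamma>")
    case True
    define C where "C = (\<Prod>l\<in>ks \<gamma> - {i}. z l ^ lk \<gamma> l - mom \<mu> l (lk \<gamma> l))"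
    have eq: "mpeval (chi \<mu> \<gamma>) (z(i := t)) = (t ^ lk \<gamma> i - mom \<mu> i (lk \<gamma> i)) * C" for t
    proof -
      have "(\<Prod>l\<in>ks \<gamma> - {i}. (z(i := t)) l ^ lk \<gamma> l - mom \<mu> l (lk \<gamma> l)) = C"
        unfolding C_def by (intro prod.cong) auto
      then show ?thesis unfolding chi_mpeval using True
        by (simp add: prod.remove[OF finite_keys True])
    qed
    have "(\<integral>t. t ^ lk \<gamma> i - mom \<mu> i (lk \<gamma> i) \<partial>(\<mu> i)) = 0"
      using I one by (simp add: mom_def)
    then show ?thesis using True I by (simp add: eq)
  next
    case False
    have eq: "mpeval (chi \<mu> \<gamma>) (z(i := t)) = mpeval (chi \<mu> \<gamma>) z" for t
      unfolding chi_mpeval using False by (intro prod.cong) auto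
    show ?thesis using False one by (simp add: eq)
  qed
  then show "integrable (\<mu> i) (\<lambda>t. mpeval (chi \<mu> \<gamma>) (z(i := t)))"
    and "(\<integral>t. mpeval (chi \<mu> \<gamma>) (z(i := t)) \<partial>(\<mu> i)) = (if i \<in> ks \<gamma> then 0 else mpeval (chi \<mu> \<gamma>) z)"
    by auto
qed

lemma Gmat_rep:
  "Gmat n dp \<mu> F k a b (I, \<alpha>1, \<gamma>1) (J, \<alpha>2, \<gamma>2) =
    (\<Sum>\<beta>\<in>(if msupp \<alpha>1 = a \<and> msupp \<alpha>2 = b \<and> (\<forall>i. lk \<alpha>1 i * lk \<alpha>2 i = 0)
          then {\<beta>\<in>MI n dp. msupp \<beta> = k \<and> munlhd (\<alpha>1 + \<alpha>2) \<beta>} else {}).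
       mconst (fhat n dp \<mu> (Xmat n \<mu> F I J) \<beta>) * chi \<mu> (\<beta> - (\<alpha>1 + \<alpha>2)))"
proof (cases "msupp \<alpha>1 = a \<and> msupp \<alpha>2 = b \<and> (\<forall>i. lk \<alpha>1 i * lk \<alpha>2 i = 0)")
  case True
  have fin: "finite {\<alpha> \<in> MI n dp. msupp \<alpha> = k}" using finite_MI by simp
  have "Gmat n dp \<mu> F k a b (I, \<alpha>1, \<gamma>1) (J, \<alpha>2, \<gamma>2) =
     (\<Sum>\<beta>\<in>{\<alpha> \<in> MI n dp. msupp \<alpha> = k}. if munlhd (\<alpha>1 + \<alpha>2) \<beta> then
        mconst (fhat n dp \<mu> (Xmat n \<mu> F I J) \<beta>) * chi \<mu> (\<beta> - (\<alpha>1 + \<alpha>2)) else 0)"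
    using True by (auto simp: Gmat_def Xk_def nabla_sum nabla_mconst_mult nabla_chi intro!: sum.cong)
  also have "\<dots> = (\<Sum>\<beta>\<in>{\<beta>\<in>MI n dp. msupp \<beta> = k \<and> munlhd (\<alpha>1 + \<alpha>2) \<beta>}.
       mconst (fhat n dp \<mu> (Xmat n \<mu> F I J) \<beta>) * chi \<mu> (\<beta> - (\<alpha>1 + \<alpha>2)))"
    by (subst sum.inter_filter[OF fin, symmetric]) (simp add: conj_assoc)
  finally show ?thesis using True by simp
next
  case False
  then show ?thesis by (simp only: Gmat_def prod.case if_not_P[OF False] if_False sum.empty)
qed

lemma rep_props:
  assumes abk: "a + b < k"
    and c: "msupp \<alpha>1 = a" "msupp \<alpha>2 = b" "\<forall>i. lk \<alpha>1 i * lk \<alpha>2 i = 0"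
    and \<beta>: "\<beta> \<in> MI n dp" "msupp \<beta> = k" "munlhd (\<alpha>1 + \<alpha>2) \<beta>"
  shows "\<beta> - (\<alpha>1 + \<alpha>2) \<in> MI n dp" "msupp (\<beta> - (\<alpha>1 + \<alpha>2)) = k - a - b"
    "ks (\<beta> - (\<alpha>1 + \<alpha>2)) \<inter> ks \<alpha>1 = {}" "ks (\<beta> - (\<alpha>1 + \<alpha>2)) \<inter> ks \<alpha>2 = {}"
proof -
  define \<delta> where "\<delta> = \<alpha>1 + \<alpha>2"
  have kd: "ks \<delta> = ks \<alpha>1 \<union> ks \<alpha>2" by (auto simp: \<delta>_def in_keys_iff lookup_add)
  have disj: "ks \<alpha>1 \<inter> ks \<alpha>2 = {}" using c(3) by (auto simp: in_keys_iff)
  have cd: "card (ks \<delta>) = a + b" using c disj by (simp add: kd card_Un_disjoint msupp_def)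
  have m: "\<And>i. lk \<delta> i = 0 \<or> lk \<delta> i = lk \<beta> i" using \<beta>(3) by (simp add: munlhd_def \<delta>_def)
  have sub: "ks \<delta> \<subseteq> ks \<beta>"
  proof
    fix i assume "i \<in> ks \<delta>"
    then have "lk \<delta> i \<noteq> 0" by (simp add: in_keys_iff)
    with m[of i] show "i \<in> ks \<beta>" by (simp add: in_keys_iff)
  qed
  have kdiff: "ks (\<beta> - \<delta>) = ks \<beta> - ks \<delta>"
  proof (rule set_eqI)
    fix i show "i \<in> ks (\<beta> - \<delta>) \<longleftrightarrow> i \<in> ks \<beta> - ks \<delta>"
      using m[of i] by (auto simp: in_keys_iff lookup_minus)
  qed
  have ms: "msupp (\<beta> - \<delta>) = k - a - b"
    using \<beta>(2) cd sub by (simp add: msupp_def kdiff card_Diff_subset)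
  have ne: "\<beta> - \<delta> \<noteq> 0"
  proof
    assume "\<beta> - \<delta> = 0"
    then have "msupp (\<beta> - \<delta>) = 0" by (simp add: msupp_def)
    with ms abk show False by simp
  qed
  have "mdeg (\<beta> - \<delta>) \<le> mdeg \<beta>"
  proof -
    have "mdeg (\<beta> - \<delta>) \<le> (\<Sum>i\<in>ks (\<beta> - \<delta>). lk \<beta> i)"
      unfolding mdeg_def by (intro sum_mono) (simp add: lookup_minus)
    also have "\<dots> \<le> mdeg \<beta>" unfolding mdeg_def kdiff by (intro sum_mono2) auto
    finally show ?thesis .
  qed
  then show "\<beta> - (\<alpha>1 + \<alpha>2) \<in> MI n dp" using \<beta>(1) ne kdiff by (auto simp: MI_def \<delta>_def)
  show "msupp (\<beta> - (\<alpha>1 + \<alpha>2)) = k - a - b" using ms by (simp add: \<delta>_def)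
  show "ks (\<beta> - (\<alpha>1 + \<alpha>2)) \<inter> ks \<alpha>1 = {}" "ks (\<beta> - (\<alpha>1 + \<alpha>2)) \<inter> ks \<alpha>2 = {}"
    using kdiff kd by (auto simp: \<delta>_def)
qed



lemma entry:
  assumes abk: "a + b < k"
  obtains B :: "mindex set" and \<phi> :: "mindex \<Rightarrow> mindex" and x :: "mindex \<Rightarrow> real" where "finite B" "\<And>\<beta>. \<beta> \<in> B \<Longrightarrow> \<phi> \<beta> \<in> MI n dp"
    "\<And>\<beta>. \<beta> \<in> B \<Longrightarrow> msupp (\<phi> \<beta>) = k - a - b"
    "\<And>\<beta>. \<beta> \<in> B \<Longrightarrow> ks (\<phi> \<beta>) \<inter> ks aa = {}"
    "\<And>\<beta>. \<beta> \<in> B \<Longrightarrow> ks (\<phi> \<beta>) \<inter> ks bb = {}"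
    "Gmat n dp \<mu> F k a b (I, aa, ga) (J, bb, gb) = (\<Sum>\<beta>\<in>B. mconst (x \<beta>) * chi \<mu> (\<phi> \<beta>))"
proof (cases "msupp aa = a \<and> msupp bb = b \<and> (\<forall>i. lk aa i * lk bb i = 0)")
  case True
  let ?B = "{\<beta>\<in>MI n dp. msupp \<beta> = k \<and> munlhd (aa + bb) \<beta>}"
  have c: "msupp aa = a" "msupp bb = b" "\<forall>i. lk aa i * lk bb i = 0" using True by auto
  show ?thesis
  proof (rule that[of ?B "\<lambda>\<beta>. \<beta> - (aa + bb)" "fhat n dp \<mu> (Xmat n \<mu> F I J)"])
    show "finite ?B" using finite_MI by simp
    show "Gmat n dp \<mu> F k a b (I, aa, ga) (J, bb, gb) =
      (\<Sum>\<beta>\<in>?B. mconst (fhat n dp \<mu> (Xmat n \<mu> F I J) \<beta>) * chi \<mu> (\<beta> - (aa + bb)))"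
      by (simp only: Gmat_rep if_P[OF True])
    show "\<And>\<beta>. \<beta> \<in> ?B \<Longrightarrow> \<beta> - (aa + bb) \<in> MI n dp" using rep_props(1)[OF abk c] by blast
    show "\<And>\<beta>. \<beta> \<in> ?B \<Longrightarrow> msupp (\<beta> - (aa + bb)) = k - a - b" using rep_props(2)[OF abk c] by blast
    show "\<And>\<beta>. \<beta> \<in> ?B \<Longrightarrow> ks (\<beta> - (aa + bb)) \<inter> ks aa = {}" using rep_props(3)[OF abk c] by blast
    show "\<And>\<beta>. \<beta> \<in> ?B \<Longrightarrow> ks (\<beta> - (aa + bb)) \<inter> ks bb = {}" using rep_props(4)[OF abk c] by blast
  qed
next
  case False
  have G0: "Gmat n dp \<mu> F k a b (I, aa, ga) (J, bb, gb) = (\<Sum>\<beta>\<in>{}. mconst 0 * chi \<mu> \<beta>)"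
    using False by (simp only: Gmat_rep if_not_P[OF False] if_False sum.empty)
  show ?thesis
    by (rule that[of "{}" id "\<lambda>_. 0"]) (use G0 in auto)
qed

lemma chi_upd_same: "i \<notin> ks \<gamma> \<Longrightarrow> mpeval (chi \<mu> \<gamma>) (z(i := t)) = mpeval (chi \<mu> \<gamma>) z"
  unfolding chi_mpeval by (intro prod.cong) auto

lemma Kval:
  assumes abk: "a + b < k"
  shows "Kker n dp \<mu> F k a b z z' r c = real n / real (k - a - b) * (Gval n dp \<mu> F k a b z r c - Gval n dp \<mu> F k a b z' r c)"
proof -
  obtain I \<alpha>1 \<gamma>1 where r: "r = (I, \<alpha>1, \<gamma>1)" by (cases r) auto
  obtain J \<alpha>2 \<gamma>2 where c: "c = (J, \<alpha>2, \<gamma>2)" by (cases c) auto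
  obtain B :: "mindex set" and \<phi> :: "mindex \<Rightarrow> mindex" and x :: "mindex \<Rightarrow> real" where B: "finite B" "\<And>\<beta>. \<beta> \<in> B \<Longrightarrow> \<phi> \<beta> \<in> MI n dp"
    "\<And>\<beta>. \<beta> \<in> B \<Longrightarrow> msupp (\<phi> \<beta>) = k - a - b"
    "\<And>\<beta>. \<beta> \<in> B \<Longrightarrow> ks (\<phi> \<beta>) \<inter> ks \<alpha>1 = {}"
    "\<And>\<beta>. \<beta> \<in> B \<Longrightarrow> ks (\<phi> \<beta>) \<inter> ks \<alpha>2 = {}"
    "Gmat n dp \<mu> F k a b (I, \<alpha>1, \<gamma>1) (J, \<alpha>2, \<gamma>2) = (\<Sum>\<beta>\<in>B. mconst (x \<beta>) * chi \<mu> (\<phi> \<beta>))"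
    by (rule entry[OF abk, where n=n and dp=dp and aa=\<alpha>1 and bb=\<alpha>2 and \<mu>=\<mu> and F=F and I=I and ga=\<gamma>1 and J=J and gb=\<gamma>2]) blast
  have G: "Gmat n dp \<mu> F k a b r c = (\<Sum>\<beta>\<in>B. mconst (x \<beta>) * chi \<mu> (\<phi> \<beta>))"
    using B(6) r c by simp
  have "Linv n dp \<mu> (Gmat n dp \<mu> F k a b r c) = mconst (real n / real (k - a - b)) * Gmat n dp \<mu> F k a b r c"
    by (rule Linv_rep[OF B(1) B(2) B(3) G])
  then show ?thesis
    by (simp add: Kker_def Gval_def mpeval_mconst_mult right_diff_distrib)
qed

lemma Gval_upd_same:
  assumes abk: "a + b < k" and r: "r = (I, \<alpha>1, \<gamma>1)" and c: "c = (J, \<alpha>2, \<gamma>2)"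
    and i: "i \<in> ks \<alpha>1 \<or> i \<in> ks \<alpha>2"
  shows "Gval n dp \<mu> F k a b (z(i := t)) r c = Gval n dp \<mu> F k a b z r c"
proof -
  obtain B :: "mindex set" and \<phi> :: "mindex \<Rightarrow> mindex" and x :: "mindex \<Rightarrow> real" where B: "finite B" "\<And>\<beta>. \<beta> \<in> B \<Longrightarrow> \<phi> \<beta> \<in> MI n dp"
    "\<And>\<beta>. \<beta> \<in> B \<Longrightarrow> msupp (\<phi> \<beta>) = k - a - b"
    "\<And>\<beta>. \<beta> \<in> B \<Longrightarrow> ks (\<phi> \<beta>) \<inter> ks \<alpha>1 = {}"
    "\<And>\<beta>. \<beta> \<in> B \<Longrightarrow> ks (\<phi> \<beta>) \<inter> ks \<alpha>2 = {}"
    "Gmat n dp \<mu> F k a b (I, \<alpha>1, \<gamma>1) (J, \<alpha>2, \<gamma>2) = (\<Sum>\<beta>\<in>B. mconst (x \<beta>) * chi \<mu> (\<phi> \<beta>))"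
    by (rule entry[OF abk, where n=n and dp=dp and aa=\<alpha>1 and bb=\<alpha>2 and \<mu>=\<mu> and F=F and I=I and ga=\<gamma>1 and J=J and gb=\<gamma>2]) blast
  have G: "Gmat n dp \<mu> F k a b r c = (\<Sum>\<beta>\<in>B. mconst (x \<beta>) * chi \<mu> (\<phi> \<beta>))"
    using B(6) r c by simp
  have "\<And>\<beta>. \<beta> \<in> B \<Longrightarrow> i \<notin> ks (\<phi> \<beta>)" using B(4,5) i by blast
  then show ?thesis unfolding Gval_def G
    by (simp add: mpeval_sum mpeval_mconst_mult chi_upd_same)
qed



lemma part2:
  assumes n_pos: "0 < n" and prob: "\<And>i. i < n \<Longrightarrow> prob_space (\<mu> i)"
    and moments: "\<And>i m. i < n \<Longrightarrow> integrable (\<mu> i) (\<lambda>t. t ^ m)"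
    and abk: "a + b < k"
  shows "(1 / real n) * (\<Sum>i<n. \<integral>t. Kker n dp \<mu> F k a b z (z(i := t)) r c \<partial>(\<mu> i)) = Gval n dp \<mu> F k a b z r c"
proof -
  obtain I \<alpha>1 \<gamma>1 where r: "r = (I, \<alpha>1, \<gamma>1)" by (cases r) auto
  obtain J \<alpha>2 \<gamma>2 where c: "c = (J, \<alpha>2, \<gamma>2)" by (cases c) auto
  obtain B :: "mindex set" and \<phi> :: "mindex \<Rightarrow> mindex" and x :: "mindex \<Rightarrow> real" where B: "finite B" "\<And>\<beta>. \<beta> \<in> B \<Longrightarrow> \<phi> \<beta> \<in> MI n dp"
    "\<And>\<beta>. \<beta> \<in> B \<Longrightarrow> msupp (\<phi> \<beta>) = k - a - b"
    "\<And>\<beta>. \<beta> \<in> B \<Longrightarrow> ks (\<phi> \<beta>) \<inter> ks \<alpha>1 = {}"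
    "\<And>\<beta>. \<beta> \<in> B \<Longrightarrow> ks (\<phi> \<beta>) \<inter> ks \<alpha>2 = {}"
    "Gmat n dp \<mu> F k a b (I, \<alpha>1, \<gamma>1) (J, \<alpha>2, \<gamma>2) = (\<Sum>\<beta>\<in>B. mconst (x \<beta>) * chi \<mu> (\<phi> \<beta>))"
    by (rule entry[OF abk, where n=n and dp=dp and aa=\<alpha>1 and bb=\<alpha>2 and \<mu>=\<mu> and F=F and I=I and ga=\<gamma>1 and J=J and gb=\<gamma>2]) blast
  have G: "Gmat n dp \<mu> F k a b r c = (\<Sum>\<beta>\<in>B. mconst (x \<beta>) * chi \<mu> (\<phi> \<beta>))"
    using B(6) r c by simp
  define m where "m = k - a - b"
  define N where "N = real n / real m"
  define ch where "ch \<beta> w = mpeval (chi \<mu> (\<phi> \<beta>)) w" for \<beta> w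
  have mpos: "0 < m" using abk by (simp add: m_def)
  have GV: "\<And>w. Gval n dp \<mu> F k a b w r c = (\<Sum>\<beta>\<in>B. x \<beta> * ch \<beta> w)"
    by (simp add: Gval_def G mpeval_sum mpeval_mconst_mult ch_def)
  have KV: "\<And>w w'. Kker n dp \<mu> F k a b w w' r c = N * ((\<Sum>\<beta>\<in>B. x \<beta> * ch \<beta> w) - (\<Sum>\<beta>\<in>B. x \<beta> * ch \<beta> w'))"
    unfolding Kval[OF abk] GV N_def m_def by simp
  have INT: "(\<integral>t. Kker n dp \<mu> F k a b z (z(i := t)) r c \<partial>(\<mu> i)) =
      N * (\<Sum>\<beta>\<in>B. x \<beta> * (if i \<in> ks (\<phi> \<beta>) then ch \<beta> z else 0))" if i: "i < n" for i
  proof -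
    interpret prob_space "\<mu> i" using prob[OF i] .
    have intg: "\<And>\<beta>. integrable (\<mu> i) (\<lambda>t. ch \<beta> (z(i := t)))"
      unfolding ch_def by (rule chi_int(1)[where \<mu>=\<mu> and i=i, OF prob[OF i] moments[OF i]])
    have intv: "\<And>\<beta>. (\<integral>t. ch \<beta> (z(i := t)) \<partial>(\<mu> i)) = (if i \<in> ks (\<phi> \<beta>) then 0 else ch \<beta> z)"
      unfolding ch_def by (rule chi_int(2)[where \<mu>=\<mu> and i=i, OF prob[OF i] moments[OF i]])
    have "(\<integral>t. Kker n dp \<mu> F k a b z (z(i := t)) r c \<partial>(\<mu> i)) =
        N * ((\<Sum>\<beta>\<in>B. x \<beta> * ch \<beta> z) - (\<integral>t. (\<Sum>\<beta>\<in>B. x \<beta> * ch \<beta> (z(i := t))) \<partial>(\<mu> i)))"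
      unfolding KV using intg prob_space by simp
    also have "(\<integral>t. (\<Sum>\<beta>\<in>B. x \<beta> * ch \<beta> (z(i := t))) \<partial>(\<mu> i)) = (\<Sum>\<beta>\<in>B. x \<beta> * (if i \<in> ks (\<phi> \<beta>) then 0 else ch \<beta> z))"
      using intg by (simp add: intv)
    also have "N * ((\<Sum>\<beta>\<in>B. x \<beta> * ch \<beta> z) - (\<Sum>\<beta>\<in>B. x \<beta> * (if i \<in> ks (\<phi> \<beta>) then 0 else ch \<beta> z)))
        = N * (\<Sum>\<beta>\<in>B. x \<beta> * (if i \<in> ks (\<phi> \<beta>) then ch \<beta> z else 0))"
      by (simp only: sum_subtractf[symmetric]) (auto intro!: sum.cong arg_cong[where f="\<lambda>v. N * v"])
    finally show ?thesis .
  qed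
  have "(\<Sum>i<n. \<integral>t. Kker n dp \<mu> F k a b z (z(i := t)) r c \<partial>(\<mu> i)) =
      N * (\<Sum>\<beta>\<in>B. \<Sum>i<n. x \<beta> * (if i \<in> ks (\<phi> \<beta>) then ch \<beta> z else 0))"
    by (simp add: INT sum_distrib_left[symmetric] sum.swap[of _ B])
  also have "\<dots> = N * (\<Sum>\<beta>\<in>B. x \<beta> * ch \<beta> z * real m)"
  proof -
    have "\<And>\<beta>. \<beta> \<in> B \<Longrightarrow> (\<Sum>i<n. x \<beta> * (if i \<in> ks (\<phi> \<beta>) then ch \<beta> z else 0)) = x \<beta> * ch \<beta> z * real m"
    proof -
      fix \<beta> assume b: "\<beta> \<in> B"
      have sub: "ks (\<phi> \<beta>) \<subseteq> {..<n}" using B(2)[OF b] by (simp add: MI_def)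
      have "(\<Sum>i<n. x \<beta> * (if i \<in> ks (\<phi> \<beta>) then ch \<beta> z else 0)) = (\<Sum>i\<in>{..<n} \<inter> ks (\<phi> \<beta>). x \<beta> * ch \<beta> z)"
        by (subst sum.inter_restrict) (auto intro!: sum.cong)
      also have "{..<n} \<inter> ks (\<phi> \<beta>) = ks (\<phi> \<beta>)" using sub by blast
      also have "card (ks (\<phi> \<beta>)) = m" using B(3)[OF b] by (simp add: msupp_def m_def)
      then have "(\<Sum>i\<in>ks (\<phi> \<beta>). x \<beta> * ch \<beta> z) = x \<beta> * ch \<beta> z * real m" by simp
      finally show "(\<Sum>i<n. x \<beta> * (if i \<in> ks (\<phi> \<beta>) then ch \<beta> z else 0)) = x \<beta> * ch \<beta> z * real m" .
    qed
    then show ?thesis by simp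
  qed
  also have "\<dots> = real n * Gval n dp \<mu> F k a b z r c"
    using mpos by (simp add: GV N_def sum_distrib_right[symmetric] sum_distrib_left)
  finally show ?thesis using n_pos by simp
qed



lemma Ddiag_upd_same:
  assumes "lk \<alpha> i = 0"
  shows "Ddiag n \<mu> (z(i := t)) (I, \<alpha>, \<gamma>) = Ddiag n \<mu> z (I, \<alpha>, \<gamma>)"
  unfolding Ddiag_def using assms by (auto intro!: prod.cong arg_cong2[where f="(*)"])

lemma part3_row:
  assumes abk: "a + b < k"
  shows "(Ddiag n \<mu> z r - Ddiag n \<mu> (z(i := t)) r) * Kker n dp \<mu> F k a b z (z(i := t)) r c = 0"
proof -
  obtain I \<alpha>1 \<gamma>1 where r: "r = (I, \<alpha>1, \<gamma>1)" by (cases r) auto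
  obtain J \<alpha>2 \<gamma>2 where c: "c = (J, \<alpha>2, \<gamma>2)" by (cases c) auto
  show ?thesis
  proof (cases "i \<in> ks \<alpha>1")
    case True
    then have "Gval n dp \<mu> F k a b (z(i := t)) r c = Gval n dp \<mu> F k a b z r c"
      using Gval_upd_same[OF abk r c] by blast
    then show ?thesis by (simp add: Kval[OF abk])
  next
    case False
    then show ?thesis using Ddiag_upd_same[of \<alpha>1 i n \<mu> z t I \<gamma>1] r by (simp add: in_keys_iff)
  qed
qed

lemma part3_col:
  assumes abk: "a + b < k"
  shows "Kker n dp \<mu> F k a b z (z(i := t)) r c * (Ddiag n \<mu> z c - Ddiag n \<mu> (z(i := t)) c) = 0"
proof -
  obtain I \<alpha>1 \<gamma>1 where r: "r = (I, \<alpha>1, \<gamma>1)" by (cases r) auto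
  obtain J \<alpha>2 \<gamma>2 where c: "c = (J, \<alpha>2, \<gamma>2)" by (cases c) auto
  show ?thesis
  proof (cases "i \<in> ks \<alpha>2")
    case True
    then have "Gval n dp \<mu> F k a b (z(i := t)) r c = Gval n dp \<mu> F k a b z r c"
      using Gval_upd_same[OF abk r c] by blast
    then show ?thesis by (simp add: Kval[OF abk])
  next
    case False
    then show ?thesis using Ddiag_upd_same[of \<alpha>2 i n \<mu> z t J \<gamma>2] c by (simp add: in_keys_iff)
  qed
qed

theorem mainTheorem11:
  fixes n dp k a b :: nat
    and \<mu> :: "nat \<Rightarrow> real measure"
    and F :: "'i::finite \<Rightarrow> 'j::finite \<Rightarrow> mpoly"
  assumes n_pos: "0 < n"
    and prob: "\<And>i. i < n \<Longrightarrow> prob_space (\<mu> i)"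
    and borel: "\<And>i. i < n \<Longrightarrow> sets (\<mu> i) = sets borel"
    and moments: "\<And>i m. i < n \<Longrightarrow> integrable (\<mu> i) (\<lambda>t. t ^ m)"
    and F_poly: "\<And>I J \<beta>. \<beta> \<in> Poly_Mapping.keys (F I J) \<Longrightarrow> Poly_Mapping.keys \<beta> \<subseteq> {..<n} \<and> mdeg \<beta> \<le> dp"
    and k_pos: "1 \<le> k"
    and abk: "a + b < k"
  defines "R \<equiv> (UNIV :: 'i set) \<times> Kset n dp"
    and "C \<equiv> (UNIV :: 'j set) \<times> Kset n dp"
    and "G \<equiv> Gval n dp \<mu> F k a b"
    and "K \<equiv> Kker n dp \<mu> F k a b"
  shows
    \<comment> \<open>(0)\<close>
    "(\<forall>i<n. AE z in Zlaw n \<mu>. AE t in \<mu> i. \<forall>r\<in>R. \<forall>c\<in>C.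
        K z (z(i := t)) r c = real n / real (k - a - b) * (G z r c - G (z(i := t)) r c))
     \<comment> \<open>(1)\<close>
     \<and> (\<forall>z z'. \<forall>r\<in>R. \<forall>c\<in>C. K z' z r c = - K z z' r c)
     \<comment> \<open>(2)\<close>
     \<and> (AE z in Zlaw n \<mu>. \<forall>r\<in>R. \<forall>c\<in>C.
        (1 / real n) * (\<Sum>i<n. \<integral>t. K z (z(i := t)) r c \<partial>(\<mu> i)) = G z r c)
     \<comment> \<open>(3)\<close>
     \<and> (\<forall>i<n. AE z in Zlaw n \<mu>. AE t in \<mu> i. \<forall>r\<in>R. \<forall>c\<in>C.
        mmult R (\<lambda>r' s. diagmat (Ddiag n \<mu> z) r' s - diagmat (Ddiag n \<mu> (z(i := t))) r' s)
              (K z (z(i := t))) r c = 0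
      \<and> mmult C (K z (z(i := t)))
              (\<lambda>s c'. diagmat (Ddiag n \<mu> z) s c' - diagmat (Ddiag n \<mu> (z(i := t))) s c') r c = 0)"
proof (intro conjI allI impI)
  fix i assume "i < n"
  show "AE z in Zlaw n \<mu>. AE t in \<mu> i. \<forall>r\<in>R. \<forall>c\<in>C.
        K z (z(i := t)) r c = real n / real (k - a - b) * (G z r c - G (z(i := t)) r c)"
    unfolding K_def G_def by (intro always_eventually allI ballI) (rule Kval[OF abk])
next
  fix z z' show "\<forall>r\<in>R. \<forall>c\<in>C. K z' z r c = - K z z' r c"
    by (simp add: K_def Kker_def)
next
  show "AE z in Zlaw n \<mu>. \<forall>r\<in>R. \<forall>c\<in>C.
        (1 / real n) * (\<Sum>i<n. \<integral>t. K z (z(i := t)) r c \<partial>(\<mu> i)) = G z r c"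
    unfolding K_def G_def
    by (intro always_eventually allI ballI) (rule part2[OF n_pos prob moments abk])
next
  fix i assume "i < n"
  show "AE z in Zlaw n \<mu>. AE t in \<mu> i. \<forall>r\<in>R. \<forall>c\<in>C.
        mmult R (\<lambda>r' s. diagmat (Ddiag n \<mu> z) r' s - diagmat (Ddiag n \<mu> (z(i := t))) r' s)
              (K z (z(i := t))) r c = 0
      \<and> mmult C (K z (z(i := t)))
              (\<lambda>s c'. diagmat (Ddiag n \<mu> z) s c' - diagmat (Ddiag n \<mu> (z(i := t))) s c') r c = 0"
  proof (intro always_eventually allI ballI conjI)
    fix z t r c
    show "mmult R (\<lambda>r' s. diagmat (Ddiag n \<mu> z) r' s - diagmat (Ddiag n \<mu> (z(i := t))) r' s)
              (K z (z(i := t))) r c = 0"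
      unfolding mmult_def
    proof (rule sum.neutral, rule ballI)
      fix s
      show "(diagmat (Ddiag n \<mu> z) r s - diagmat (Ddiag n \<mu> (z(i := t))) r s) * K z (z(i := t)) s c = 0"
        using part3_row[OF abk, of n \<mu> z r i t dp F c] by (auto simp: diagmat_def K_def)
    qed
    show "mmult C (K z (z(i := t)))
              (\<lambda>s c'. diagmat (Ddiag n \<mu> z) s c' - diagmat (Ddiag n \<mu> (z(i := t))) s c') r c = 0"
      unfolding mmult_def
    proof (rule sum.neutral, rule ballI)
      fix s
      show "K z (z(i := t)) r s * (diagmat (Ddiag n \<mu> z) s c - diagmat (Ddiag n \<mu> (z(i := t))) s c) = 0"
        using part3_col[OF abk, of n dp \<mu> F z i t r c] by (auto simp: diagmat_def K_def)
    qed
  qed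
qed

end
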